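(* Let $G$ be a group (finite or infinite), let $F$ be a field of characteristic zero, and let $\mathfrak{S}$ be an $F$-subspace of $F[G]$. Then $\mathfrak{S}$ is a Schur module over $G$ if and only if $\mathfrak{S}$ is closed under the Hadamard product $\circ$ and for every $g\in G$ there exists $\alpha\in\mathfrak{S}$ with $g\in\operatorname{supp}(\alpha)$.
   Context: Elements of $F[G]$ are $\alpha=\sum_{g\in G}\alpha_g g$ with finitely many nonzero $\alpha_g\in F$; $\operatorname{supp}(\alpha)=\{g\in G\mid \alpha_g\neq 0\}$. The Hadamard product is $\alpha\circ\beta=\sum_g\alpha_g\beta_g g$. For finite $C\subseteq G$, $\overline{C}=\sum_{g\in C}g$. A partition $\mathcal{P}$ of $G$ has finite support if every block $C\in\mathcal{P}$ is finite. An $F$-subspace $\mathfrak{S}\subseteq F[G]$ is a Schur module if there is a partition $\mathcal{P}$ of $G$ of finite support such that $\mathfrak{S}=\operatorname{Span}_F\{\overline{C}\mid C\in\mathcal{P}\}$. *)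

theory Defs
  imports Complex_Main "HOL-Library.Disjoint_Sets" "HOL-Library.Function_Algebras"
begin

text \<open>Elements of the group algebra F[G] are represented as finitely supported
  functions G \<Rightarrow> F (the coefficient maps).\<close>

definition group_algebra :: "('g \<Rightarrow> 'f::zero) set" where
  "group_algebra = {\<alpha>. finite {g. \<alpha> g \<noteq> 0}}"

definition supp :: "('g \<Rightarrow> 'f::zero) \<Rightarrow> 'g set" where
  "supp \<alpha> = {g. \<alpha> g \<noteq> 0}"

definition hadamard :: "('g \<Rightarrow> 'f::times) \<Rightarrow> ('g \<Rightarrow> 'f) \<Rightarrow> ('g \<Rightarrow> 'f)" where
  "hadamard \<alpha> \<beta> = (\<lambda>g. \<alpha> g * \<beta> g)"

definition fscale :: "'f::times \<Rightarrow> ('g \<Rightarrow> 'f) \<Rightarrow> ('g \<Rightarrow> 'f)" where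
  "fscale c \<alpha> = (\<lambda>g. c * \<alpha> g)"

text \<open>The element \<open>\<overline>C\<close> = sum of the elements of a finite set C.\<close>
definition class_sum :: "'g set \<Rightarrow> ('g \<Rightarrow> 'f::{zero,one})" where
  "class_sum C = (\<lambda>g. if g \<in> C then 1 else 0)"

definition schur_module :: "('g \<Rightarrow> 'f::field) set \<Rightarrow> bool" where
  "schur_module S \<longleftrightarrow>
     (\<exists>P. partition_on (UNIV :: 'g set) P \<and> (\<forall>C\<in>P. finite C) \<and>
          S = module.span fscale (class_sum ` P))"

end

theory Submission
  imports Defs
begin

interpretation fm: module "fscale :: 'a::field \<Rightarrow> ('b \<Rightarrow> 'a) \<Rightarrow> ('b \<Rightarrow> 'a)"
  by unfold_locales (auto simp: fscale_def fun_eq_iff algebra_simps)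

lemma sum_fun_apply: "(sum f A) x = (\<Sum>a\<in>A. f a x)"
  by (induct A rule: infinite_finite_induct) auto

lemma fscale_apply[simp]: "fscale c a x = c * a x" by (simp add: fscale_def)
lemma hadamard_apply[simp]: "hadamard a b x = a x * b x" by (simp add: hadamard_def)
lemma class_sum_apply: "class_sum C x = (if x \<in> C then 1 else 0)" by (simp add: class_sum_def)

lemma span_eq:
  fixes P :: "'g set set"
  assumes P: "partition_on UNIV P" and fin: "\<forall>C\<in>P. finite C"
  shows "fm.span (class_sum ` P :: ('g \<Rightarrow> 'f::field) set) =
     {\<alpha>. finite (supp \<alpha>) \<and> (\<forall>C\<in>P. \<forall>x\<in>C. \<forall>y\<in>C. \<alpha> x = \<alpha> y)}" (is "_ = ?T")
proof
  have disj: "\<And>C D x. C \<in> P \<Longrightarrow> D \<in> P \<Longrightarrow> x \<in> C \<Longrightarrow> x \<in> D \<Longrightarrow> C = D"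
    using partition_onD2[OF P] by (auto simp: disjoint_def)
  have cov: "\<And>x. \<exists>C\<in>P. x \<in> C" using partition_onD1[OF P] by auto
  show "fm.span (class_sum ` P) \<subseteq> ?T"
  proof (rule fm.span_minimal)
    show "class_sum ` P \<subseteq> ?T"
    proof
      fix a :: "'g \<Rightarrow> 'f" assume "a \<in> class_sum ` P"
      then obtain C where C: "C \<in> P" and a: "a = class_sum C" by blast
      have "supp (class_sum C :: 'g \<Rightarrow> 'f) = C" by (auto simp: supp_def class_sum_apply)
      then have F: "finite (supp (class_sum C :: 'g \<Rightarrow> 'f))" using fin C by simp
      have "\<forall>D\<in>P. \<forall>x\<in>D. \<forall>y\<in>D. (class_sum C :: 'g \<Rightarrow> 'f) x = class_sum C y"
      proof (intro ballI)
        fix D x y assume D: "D \<in> P" and xy: "x \<in> D" "y \<in> D"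
        show "(class_sum C :: 'g \<Rightarrow> 'f) x = class_sum C y"
        proof (cases "C = D")
          case True then show ?thesis using xy by (simp add: class_sum_apply)
        next
          case False
          then have "x \<notin> C" "y \<notin> C" using disj[OF C D] xy by blast+
          then show ?thesis by (simp add: class_sum_apply)
        qed
      qed
      then show "a \<in> ?T" unfolding a using F by (simp only: mem_Collect_eq)
    qed
    show "fm.subspace ?T"
    proof (rule fm.subspaceI)
      show "0 \<in> ?T" by (simp add: supp_def)
    next
      fix x y assume X: "x \<in> ?T" and Y: "y \<in> ?T"
      have "supp (x + y) \<subseteq> supp x \<union> supp y" by (auto simp: supp_def)
      moreover have "finite (supp x \<union> supp y)" using X Y by blast
      ultimately have "finite (supp (x + y))" by (rule finite_subset)
      moreover have "\<forall>C\<in>P. \<forall>a\<in>C. \<forall>b\<in>C. (x + y) a = (x + y) b"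
      proof (intro ballI)
        fix C a b assume "C \<in> P" "a \<in> C" "b \<in> C"
        then have "x a = x b" "y a = y b" using X Y by blast+
        then show "(x + y) a = (x + y) b" by simp
      qed
      ultimately show "x + y \<in> ?T" by (simp only: mem_Collect_eq)
    next
      fix c x assume X: "x \<in> ?T"
      have "supp (fscale c x) \<subseteq> supp x" by (auto simp: supp_def)
      moreover have "finite (supp x)" using X by blast
      ultimately have "finite (supp (fscale c x))" by (rule finite_subset)
      moreover have "\<forall>C\<in>P. \<forall>a\<in>C. \<forall>b\<in>C. fscale c x a = fscale c x b"
      proof (intro ballI)
        fix C a b assume "C \<in> P" "a \<in> C" "b \<in> C"
        then have "x a = x b" using X by blast
        then show "fscale c x a = fscale c x b" by simp
      qed
      ultimately show "fscale c x \<in> ?T" by (simp only: mem_Collect_eq)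
    qed
  qed
  show "?T \<subseteq> fm.span (class_sum ` P)"
  proof clarify
    fix \<alpha> :: "'g \<Rightarrow> 'f" assume fs: "finite (supp \<alpha>)" and const: "\<forall>C\<in>P. \<forall>x\<in>C. \<forall>y\<in>C. \<alpha> x = \<alpha> y"
    define Q where "Q = {C\<in>P. C \<inter> supp \<alpha> \<noteq> {}}"
    define r where "r C = (SOME x. x \<in> C)" for C :: "'g set"
    have Qfin: "finite Q"
    proof -
      have "Q \<subseteq> (\<lambda>x. THE C. C \<in> P \<and> x \<in> C) ` supp \<alpha>"
      proof
        fix C assume "C \<in> Q"
        then obtain x where x: "x \<in> C" "x \<in> supp \<alpha>" "C \<in> P" by (auto simp: Q_def)
        have "(THE C. C \<in> P \<and> x \<in> C) = C"
        proof (rule the_equality)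
          show "C \<in> P \<and> x \<in> C" using x by blast
          fix C' assume "C' \<in> P \<and> x \<in> C'"
          then show "C' = C" using disj[of C' C x] x by blast
        qed
        then show "C \<in> (\<lambda>x. THE C. C \<in> P \<and> x \<in> C) ` supp \<alpha>" using x by force
      qed
      then show ?thesis using fs by (meson finite_imageI finite_subset)
    qed
    have eq: "\<alpha> = (\<Sum>C\<in>Q. fscale (\<alpha> (r C)) (class_sum C))"
    proof
      fix x
      obtain C0 where C0: "C0 \<in> P" "x \<in> C0" using cov by blast
      have rC0: "r C0 \<in> C0" using C0 unfolding r_def by (metis someI)
      have "(\<Sum>C\<in>Q. fscale (\<alpha> (r C)) (class_sum C)) x = (\<Sum>C\<in>Q. \<alpha> (r C) * class_sum C x)"
        by (simp add: sum_fun_apply)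
      also have "\<dots> = (\<Sum>C\<in>Q \<inter> {C0}. \<alpha> (r C) * class_sum C x)"
      proof (rule sum.mono_neutral_right)
        show "finite Q" by (rule Qfin)
        show "Q \<inter> {C0} \<subseteq> Q" by blast
        show "\<forall>C\<in>Q - Q \<inter> {C0}. \<alpha> (r C) * class_sum C x = 0"
        proof
          fix C assume "C \<in> Q - Q \<inter> {C0}"
          then have "C \<in> P" "C \<noteq> C0" by (auto simp: Q_def)
          then have "x \<notin> C" using disj[OF _ C0(1) _ C0(2)] by blast
          then show "\<alpha> (r C) * class_sum C x = 0" by (simp add: class_sum_apply)
        qed
      qed
      also have "\<dots> = \<alpha> x"
      proof (cases "C0 \<in> Q")
        case True
        then have "Q \<inter> {C0} = {C0}" by auto
        moreover have "\<alpha> (r C0) = \<alpha> x" using const C0 rC0 by blast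
        ultimately show ?thesis using C0 by (simp add: class_sum_apply)
      next
        case False
        then have "\<alpha> x = 0" using C0 by (auto simp: Q_def supp_def)
        then show ?thesis using False by simp
      qed
      finally show "\<alpha> x = (\<Sum>C\<in>Q. fscale (\<alpha> (r C)) (class_sum C)) x" by simp
    qed
    have "(\<Sum>C\<in>Q. fscale (\<alpha> (r C)) (class_sum C)) \<in> fm.span (class_sum ` P)"
    proof (rule fm.span_sum)
      fix C assume "C \<in> Q"
      then have "C \<in> P" by (simp add: Q_def)
      then show "fscale (\<alpha> (r C)) (class_sum C) \<in> fm.span (class_sum ` P)"
        by (intro fm.span_scale fm.span_base imageI)
    qed
    then show "\<alpha> \<in> fm.span (class_sum ` P)" using eq by simp
  qed
qed


lemma L1:
  fixes S :: "('g \<Rightarrow> 'f::field) set"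
  assumes sub: "fm.subspace S" and had: "\<forall>\<alpha>\<in>S. \<forall>\<beta>\<in>S. hadamard \<alpha> \<beta> \<in> S"
    and th: "\<theta> \<in> S" and W: "finite W"
  shows "(\<lambda>x. \<theta> x * (\<Prod>w\<in>W. \<theta> x - w)) \<in> S"
  using W
proof (induction W rule: finite_induct)
  case empty
  have "(\<lambda>x. \<theta> x * (\<Prod>w\<in>{}. \<theta> x - w)) = \<theta>" by simp
  then show ?case using th by simp
next
  case (insert w W)
  let ?r = "\<lambda>x. \<theta> x * (\<Prod>w\<in>W. \<theta> x - w)"
  have "hadamard ?r \<theta> \<in> S" using had insert.IH th by blast
  moreover have "fscale (- w) ?r \<in> S" using sub insert.IH unfolding fm.subspace_def by blast
  ultimately have "hadamard ?r \<theta> + fscale (- w) ?r \<in> S" using sub unfolding fm.subspace_def by blast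
  moreover have "hadamard ?r \<theta> + fscale (- w) ?r = (\<lambda>x. \<theta> x * (\<Prod>w\<in>insert w W. \<theta> x - w))"
    using insert.hyps by (simp add: fun_eq_iff algebra_simps)
  ultimately show ?case by simp
qed

lemma L2:
  fixes S :: "('g \<Rightarrow> 'f::field) set"
  assumes sub: "fm.subspace S" and had: "\<forall>\<alpha>\<in>S. \<forall>\<beta>\<in>S. hadamard \<alpha> \<beta> \<in> S"
    and th: "\<theta> \<in> S" and fin: "finite (supp \<theta>)" and v: "v \<noteq> 0"
  shows "class_sum {x. \<theta> x = v} \<in> S"
proof -
  define W where "W = range \<theta> - {v}"
  have "range \<theta> \<subseteq> insert 0 (\<theta> ` supp \<theta>)" by (auto simp: supp_def)
  then have "finite (range \<theta>)" using fin by (meson finite_imageI finite_insert finite_subset)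
  then have W: "finite W" unfolding W_def by simp
  define c where "c = v * (\<Prod>w\<in>W. v - w)"
  have "c \<noteq> 0" unfolding c_def using v W by (auto simp: W_def)
  have "fscale (1 / c) (\<lambda>x. \<theta> x * (\<Prod>w\<in>W. \<theta> x - w)) \<in> S"
    using L1[OF sub had th W] sub unfolding fm.subspace_def by blast
  moreover have "fscale (1 / c) (\<lambda>x. \<theta> x * (\<Prod>w\<in>W. \<theta> x - w)) = class_sum {x. \<theta> x = v}"
  proof
    fix x
    show "fscale (1 / c) (\<lambda>x. \<theta> x * (\<Prod>w\<in>W. \<theta> x - w)) x = class_sum {x. \<theta> x = v} x"
    proof (cases "\<theta> x = v")
      case True
      then show ?thesis using \<open>c \<noteq> 0\<close> by (simp add: class_sum_apply c_def)
    next
      case False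
      then have "\<theta> x \<in> W" by (simp add: W_def)
      then have "(\<Prod>w\<in>W. \<theta> x - w) = 0" using W by (metis (no_types, lifting) prod_zero_iff right_minus_eq)
      then show ?thesis using False by (simp add: class_sum_apply)
    qed
  qed
  ultimately show ?thesis by simp
qed

lemma L4:
  fixes S :: "('g \<Rightarrow> 'f::field) set"
  assumes had: "\<forall>\<alpha>\<in>S. \<forall>\<beta>\<in>S. hadamard \<alpha> \<beta> \<in> S"
    and H: "finite H" and E: "class_sum E \<in> S" and D: "\<forall>h\<in>H. class_sum (D h) \<in> S"
  shows "class_sum (E \<inter> \<Inter>(D ` H)) \<in> S"
  using H D
proof (induction H rule: finite_induct)
  case empty
  then show ?case using E by simp
next
  case (insert h H)
  then have a: "class_sum (E \<inter> \<Inter>(D ` H)) \<in> S" and b: "class_sum (D h) \<in> S" by simp_all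
  have "hadamard (class_sum (E \<inter> \<Inter>(D ` H))) (class_sum (D h)) \<in> S" using had a b by blast
  moreover have "hadamard (class_sum (E \<inter> \<Inter>(D ` H))) (class_sum (D h)) = (class_sum (E \<inter> \<Inter>(D ` insert h H)) :: 'g \<Rightarrow> 'f)"
    by (auto simp: fun_eq_iff class_sum_apply)
  ultimately show ?case by simp
qed


lemma L5:
  fixes S :: "('g \<Rightarrow> 'f::field) set"
  assumes SG: "S \<subseteq> group_algebra" and sub: "fm.subspace S"
    and had: "\<forall>\<alpha>\<in>S. \<forall>\<beta>\<in>S. hadamard \<alpha> \<beta> \<in> S"
    and cov: "\<forall>g. \<exists>\<alpha>\<in>S. g \<in> supp \<alpha>"
  shows "class_sum {x. \<forall>\<alpha>\<in>S. \<alpha> x = \<alpha> g} \<in> S"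
proof -
  define K where "K = {x. \<forall>\<alpha>\<in>S. \<alpha> x = \<alpha> g}"
  have finS: "\<And>\<alpha>. \<alpha> \<in> S \<Longrightarrow> finite (supp \<alpha>)" using SG by (auto simp: group_algebra_def supp_def)
  obtain \<gamma> where \<gamma>: "\<gamma> \<in> S" "\<gamma> g \<noteq> 0" using cov by (auto simp: supp_def)
  define E0 where "E0 = {x. \<gamma> x = \<gamma> g}"
  have E0S: "class_sum E0 \<in> S" unfolding E0_def by (rule L2[OF sub had \<gamma>(1) finS[OF \<gamma>(1)] \<gamma>(2)])
  have "E0 \<subseteq> supp \<gamma>" using \<gamma>(2) by (auto simp: E0_def supp_def)
  then have "finite E0" using finS[OF \<gamma>(1)] by (rule finite_subset)
  define H where "H = E0 - K"
  have Hfin: "finite H" using \<open>finite E0\<close> by (simp add: H_def)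
  have "\<forall>h\<in>H. \<exists>\<beta>\<in>S. \<beta> g \<noteq> 0 \<and> \<beta> h \<noteq> \<beta> g"
  proof
    fix h assume "h \<in> H"
    then have hE: "\<gamma> h = \<gamma> g" and "h \<notin> K" by (auto simp: H_def E0_def)
    then obtain \<beta> where \<beta>: "\<beta> \<in> S" "\<beta> h \<noteq> \<beta> g" by (auto simp: K_def)
    show "\<exists>\<beta>\<in>S. \<beta> g \<noteq> 0 \<and> \<beta> h \<noteq> \<beta> g"
    proof (cases "\<beta> g = 0")
      case False then show ?thesis using \<beta> by blast
    next
      case True
      have "\<beta> + \<gamma> \<in> S" using sub \<beta>(1) \<gamma>(1) unfolding fm.subspace_def by blast
      moreover have "(\<beta> + \<gamma>) g \<noteq> 0" using True \<gamma>(2) by simp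
      moreover have "(\<beta> + \<gamma>) h \<noteq> (\<beta> + \<gamma>) g" using True \<beta>(2) hE by simp
      ultimately show ?thesis by blast
    qed
  qed
  then obtain B where B: "\<And>h. h \<in> H \<Longrightarrow> B h \<in> S \<and> B h g \<noteq> 0 \<and> B h h \<noteq> B h g"
    by metis
  define D where "D h = {x. B h x = B h g}" for h
  have DS: "\<forall>h\<in>H. class_sum (D h) \<in> S"
  proof
    fix h assume "h \<in> H"
    then show "class_sum (D h) \<in> S" unfolding D_def using B[of h] finS[of "B h"]
      by (intro L2[OF sub had]) auto
  qed
  have "K = E0 \<inter> \<Inter>(D ` H)"
  proof
    show "K \<subseteq> E0 \<inter> \<Inter>(D ` H)"
    proof
      fix x assume x: "x \<in> K"
      have "\<gamma> x = \<gamma> g" using x \<gamma>(1) unfolding K_def by blast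
      moreover have "\<forall>h\<in>H. B h x = B h g" using x B unfolding K_def by blast
      ultimately show "x \<in> E0 \<inter> \<Inter>(D ` H)" by (auto simp: E0_def D_def)
    qed
    show "E0 \<inter> \<Inter>(D ` H) \<subseteq> K"
    proof
      fix x assume x: "x \<in> E0 \<inter> \<Inter>(D ` H)"
      show "x \<in> K"
      proof (rule ccontr)
        assume "x \<notin> K"
        then have "x \<in> H" using x by (simp add: H_def)
        then have "x \<in> D x" using x by blast
        then show False using B[OF \<open>x \<in> H\<close>] by (simp add: D_def)
      qed
    qed
  qed
  then show ?thesis using L4[OF had Hfin E0S DS] by (simp add: K_def)
qed

theorem theorem2p7:
  fixes S :: "('g::group_add \<Rightarrow> 'f::field_char_0) set"
  assumes "S \<subseteq> group_algebra"
    and "module.subspace fscale S"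
  shows "schur_module S \<longleftrightarrow>
           (\<forall>\<alpha>\<in>S. \<forall>\<beta>\<in>S. hadamard \<alpha> \<beta> \<in> S) \<and>
           (\<forall>g. \<exists>\<alpha>\<in>S. g \<in> supp \<alpha>)"
proof
  assume "schur_module S"
  then obtain P where P: "partition_on (UNIV :: 'g set) P" and fin: "\<forall>C\<in>P. finite C"
    and SP: "S = fm.span (class_sum ` P)" unfolding schur_module_def by blast
  have ST: "S = {\<alpha>. finite (supp \<alpha>) \<and> (\<forall>C\<in>P. \<forall>x\<in>C. \<forall>y\<in>C. \<alpha> x = \<alpha> y)}"
    using SP span_eq[OF P fin] by simp
  have "\<forall>\<alpha>\<in>S. \<forall>\<beta>\<in>S. hadamard \<alpha> \<beta> \<in> S"
  proof (intro ballI)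
    fix \<alpha> \<beta> assume A: "\<alpha> \<in> S" and B: "\<beta> \<in> S"
    have "supp (hadamard \<alpha> \<beta>) \<subseteq> supp \<alpha>" by (auto simp: supp_def)
    moreover have "finite (supp \<alpha>)" using A ST by blast
    ultimately have "finite (supp (hadamard \<alpha> \<beta>))" by (rule finite_subset)
    moreover have "\<forall>C\<in>P. \<forall>a\<in>C. \<forall>b\<in>C. hadamard \<alpha> \<beta> a = hadamard \<alpha> \<beta> b"
    proof (intro ballI)
      fix C a b assume "C \<in> P" "a \<in> C" "b \<in> C"
      then have "\<alpha> a = \<alpha> b" "\<beta> a = \<beta> b" using A B ST by blast+
      then show "hadamard \<alpha> \<beta> a = hadamard \<alpha> \<beta> b" by simp
    qed
    ultimately show "hadamard \<alpha> \<beta> \<in> S" using ST by (simp only: mem_Collect_eq)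
  qed
  moreover have "\<forall>g. \<exists>\<alpha>\<in>S. g \<in> supp \<alpha>"
  proof
    fix g
    obtain C where C: "C \<in> P" "g \<in> C" using partition_onD1[OF P] by blast
    have "class_sum C \<in> S" unfolding SP using C(1) by (intro fm.span_base imageI)
    moreover have "g \<in> supp (class_sum C :: 'g \<Rightarrow> 'f)" using C(2) by (simp add: supp_def class_sum_apply)
    ultimately show "\<exists>\<alpha>\<in>S. g \<in> supp \<alpha>" by blast
  qed
  ultimately show "(\<forall>\<alpha>\<in>S. \<forall>\<beta>\<in>S. hadamard \<alpha> \<beta> \<in> S) \<and> (\<forall>g. \<exists>\<alpha>\<in>S. g \<in> supp \<alpha>)" by blast
next
  assume R: "(\<forall>\<alpha>\<in>S. \<forall>\<beta>\<in>S. hadamard \<alpha> \<beta> \<in> S) \<and> (\<forall>g. \<exists>\<alpha>\<in>S. g \<in> supp \<alpha>)"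
  then have had: "\<forall>\<alpha>\<in>S. \<forall>\<beta>\<in>S. hadamard \<alpha> \<beta> \<in> S" and cov: "\<forall>g. \<exists>\<alpha>\<in>S. g \<in> supp \<alpha>" by blast+
  have sub: "fm.subspace S" using assms(2) .
  have finS: "\<And>\<alpha>. \<alpha> \<in> S \<Longrightarrow> finite (supp \<alpha>)" using assms(1) by (auto simp: group_algebra_def supp_def)
  define cls where "cls g = {x. \<forall>\<alpha>\<in>S. \<alpha> x = \<alpha> g}" for g
  define P where "P = range cls"
  have self: "\<And>g. g \<in> cls g" by (simp add: cls_def)
  have same: "\<And>g x. x \<in> cls g \<Longrightarrow> cls x = cls g" by (auto simp: cls_def)
  have P: "partition_on (UNIV :: 'g set) P"
  proof (rule partition_onI)
    show "\<Union>P = UNIV" using self by (auto simp: P_def)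
    show "{} \<notin> P" using self by (auto simp: P_def)
    fix p q assume "p \<in> P" "q \<in> P" "p \<noteq> q"
    then obtain a b where ab: "p = cls a" "q = cls b" by (auto simp: P_def)
    show "disjnt p q"
    proof (rule ccontr)
      assume "\<not> disjnt p q"
      then obtain x where "x \<in> cls a" "x \<in> cls b" using ab by (auto simp: disjnt_def)
      then have "cls a = cls b" using same by metis
      then show False using \<open>p \<noteq> q\<close> ab by simp
    qed
  qed
  have fin: "\<forall>C\<in>P. finite C"
  proof
    fix C assume "C \<in> P"
    then obtain g where g: "C = cls g" by (auto simp: P_def)
    obtain \<alpha> where \<alpha>: "\<alpha> \<in> S" "g \<in> supp \<alpha>" using cov by blast
    have "cls g \<subseteq> supp \<alpha>"
    proof
      fix x assume "x \<in> cls g"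
      then have "\<alpha> x = \<alpha> g" using \<alpha>(1) unfolding cls_def by blast
      then show "x \<in> supp \<alpha>" using \<alpha>(2) by (simp add: supp_def)
    qed
    then show "finite C" using g finS[OF \<alpha>(1)] finite_subset by blast
  qed
  have CS: "class_sum ` P \<subseteq> S"
  proof
    fix a :: "'g \<Rightarrow> 'f" assume "a \<in> class_sum ` P"
    then obtain g where "a = class_sum (cls g)" by (auto simp: P_def)
    then show "a \<in> S" unfolding cls_def using L5[OF assms(1) sub had cov] by simp
  qed
  have "S = fm.span (class_sum ` P)"
  proof
    show "fm.span (class_sum ` P) \<subseteq> S" using fm.span_minimal[OF CS sub] .
    show "S \<subseteq> fm.span (class_sum ` P)"
    proof
      fix \<alpha> :: "'g \<Rightarrow> 'f" assume A: "\<alpha> \<in> S"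
      have "\<forall>C\<in>P. \<forall>x\<in>C. \<forall>y\<in>C. \<alpha> x = \<alpha> y"
      proof (intro ballI)
        fix C x y assume "C \<in> P" "x \<in> C" "y \<in> C"
        then obtain g where "x \<in> cls g" "y \<in> cls g" by (auto simp: P_def)
        then have "\<alpha> x = \<alpha> g" "\<alpha> y = \<alpha> g" using A unfolding cls_def by blast+
        then show "\<alpha> x = \<alpha> y" by simp
      qed
      then have "\<alpha> \<in> {\<alpha>. finite (supp \<alpha>) \<and> (\<forall>C\<in>P. \<forall>x\<in>C. \<forall>y\<in>C. \<alpha> x = \<alpha> y)}"
        using finS[OF A] by (simp only: mem_Collect_eq)
      then show "\<alpha> \<in> fm.span (class_sum ` P)" unfolding span_eq[OF P fin] .
    qed
  qed
  then show "schur_module S" unfolding schur_module_def using P fin by blast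
qed

end
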